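(* Let $n\ge 4$ with $n\equiv 3\pmod 6$, and let $G=P_4\cup P_{n-5}\cup K_1$ (disjoint union of a path on $4$ vertices, a path on $n-5$ vertices, and an isolated vertex). Then $\operatorname{rank}(A_G+I_n)=\operatorname{rank}(A_{\overline G}+I_n)=n$.
   Context: All graphs are simple. $P_m$ is the path on $m$ vertices, $K_1$ a single vertex, and $\cup$ denotes disjoint union of graphs. $A_G$ denotes the $n\times n$ adjacency matrix of $G$, $\overline{G}$ the complement of $G$, $I_n$ the identity matrix, and rank is over $\mathbb{R}$. *)

theory Defs
  imports Main "Jordan_Normal_Form.DL_Rank"
begin

text \<open>A simple graph on the vertex set {0..<m} is represented by its number of
vertices m together with a symmetric irreflexive adjacency relation.\<close>

type_synonym graph = "nat \<times> (nat \<Rightarrow> nat \<Rightarrow> bool)"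

definition gverts :: "graph \<Rightarrow> nat" where "gverts G = fst G"
definition gadj :: "graph \<Rightarrow> nat \<Rightarrow> nat \<Rightarrow> bool" where "gadj G = snd G"

definition path_graph :: "nat \<Rightarrow> graph" where
  "path_graph m = (m, \<lambda>i j. i < m \<and> j < m \<and> (i + 1 = j \<or> j + 1 = i))"

definition K1 :: graph where "K1 = (1, \<lambda>i j. False)"

definition disj_union :: "graph \<Rightarrow> graph \<Rightarrow> graph" where
  "disj_union G H = (gverts G + gverts H,
     \<lambda>i j. (i < gverts G \<and> j < gverts G \<and> gadj G i j) \<or>
           (gverts G \<le> i \<and> gverts G \<le> j \<and> i < gverts G + gverts H \<and> j < gverts G + gverts H
            \<and> gadj H (i - gverts G) (j - gverts G)))"

definition complement :: "graph \<Rightarrow> graph" where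
  "complement G = (gverts G, \<lambda>i j. i < gverts G \<and> j < gverts G \<and> i \<noteq> j \<and> \<not> gadj G i j)"

definition adj_mat :: "graph \<Rightarrow> real mat" where
  "adj_mat G = mat (gverts G) (gverts G) (\<lambda>(i, j). if gadj G i j then 1 else 0)"

definition real_rank :: "real mat \<Rightarrow> nat" where
  "real_rank A = vec_space.rank (dim_row A) A"

end

theory Submission
  imports Defs
begin

lemma path_plus:
  fixes g :: "nat \<Rightarrow> real"
  assumes "m \<ge> 2" "m mod 3 = 1" "g 0 + g 1 = 0"
    and "\<And>k. 1 \<le> k \<Longrightarrow> k + 1 < m \<Longrightarrow> g (k - 1) + g k + g (k + 1) = 0"
    and "g (m - 2) + g (m - 1) = 0"
  shows "\<forall>k<m. g k = 0"
proof -
  define h where "h k = (if k mod 3 = 0 then g 0 else if k mod 3 = 1 then - g 0 else 0)" for k :: nat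
  have hs: "h k + h (k+1) + h (k+2) = 0" for k
  proof -
    have "(k mod 3 = 0 \<and> (k+1) mod 3 = 1 \<and> (k+2) mod 3 = 2) \<or> (k mod 3 = 1 \<and> (k+1) mod 3 = 2 \<and> (k+2) mod 3 = 0) \<or> (k mod 3 = 2 \<and> (k+1) mod 3 = 0 \<and> (k+2) mod 3 = 1)" by presburger
    then show ?thesis unfolding h_def by (elim disjE) (simp only:, simp)+
  qed
  have IH: "k + 1 < m \<longrightarrow> g k = h k \<and> g (k + 1) = h (k + 1)" for k
  proof (induction k)
    case 0 then show ?case using assms(3) by (simp add: h_def)
  next
    case (Suc k)
    show ?case
    proof
      assume a: "Suc k + 1 < m"
      then have e: "g k = h k" "g (k+1) = h (k+1)" using Suc by auto
      have "g k + g (k+1) + g (k+2) = 0" using assms(4)[of "k+1"] a by simp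
      then have "g (k+2) = h (k+2)" using e hs[of k] by linarith
      then show "g (Suc k) = h (Suc k) \<and> g (Suc k + 1) = h (Suc k + 1)"
        using e by simp
    qed
  qed
  have gh: "g k = h k" if k: "k < m" for k
  proof (cases k)
    case 0 then show ?thesis using IH[of 0] assms(1) by simp
  next
    case (Suc j) then show ?thesis using IH[of j] k by simp
  qed
  obtain q where q: "m = 3*q+1" using assms(2) by (metis mult_div_mod_eq add.commute mult.commute)
  then have "q \<ge> 1" using assms(1) by simp
  then obtain r where "q = r + 1" by (metis le_add_diff_inverse2)
  then have mm: "m - 1 = 3 * q" "m - 2 = 3 * r + 2" using q by simp_all
  have "(3*r+2) mod 3 = (2::nat)" by presburger
  then have "(m - 1) mod 3 = 0" "(m - 2) mod 3 = 2" using mm by simp_all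
  then have "g 0 = 0" using assms(5) gh[of "m-1"] gh[of "m-2"] assms(1) by (simp add: h_def)
  then show ?thesis using gh by (simp add: h_def)
qed

lemma path_adj:
  fixes g :: "nat \<Rightarrow> real"
  assumes "m \<ge> 2" "even m" "g 1 = 0"
    and "\<And>k. 1 \<le> k \<Longrightarrow> k + 1 < m \<Longrightarrow> g (k - 1) + g (k + 1) = 0"
    and "g (m - 2) = 0"
  shows "\<forall>k<m. g k = 0"
proof -
  define h where "h k = (if even k then (-1) ^ (k div 2) * g 0 else 0)" for k :: nat
  have hs: "h k + h (k+2) = 0" for k
    unfolding h_def by simp
  have IH: "k + 1 < m \<longrightarrow> g k = h k \<and> g (k + 1) = h (k + 1)" for k
  proof (induction k)
    case 0 then show ?case using assms(3) by (simp add: h_def)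
  next
    case (Suc k)
    show ?case
    proof
      assume a: "Suc k + 1 < m"
      then have e: "g k = h k" "g (k+1) = h (k+1)" using Suc by auto
      have "g k + g (k+2) = 0" using assms(4)[of "k+1"] a by simp
      then have "g (k+2) = h (k+2)" using e hs[of k] by linarith
      then show "g (Suc k) = h (Suc k) \<and> g (Suc k + 1) = h (Suc k + 1)"
        using e by simp
    qed
  qed
  have gh: "g k = h k" if k: "k < m" for k
  proof (cases k)
    case 0 then show ?thesis using IH[of 0] assms(1) by simp
  next
    case (Suc j) then show ?thesis using IH[of j] k by simp
  qed
  have "even (m - 2)" using assms(1,2) by simp
  then have "g 0 = 0" using assms(5) gh[of "m-2"] assms(1) by (simp add: h_def)
  then show ?thesis using gh by (simp add: h_def)
qed


lemma G_char:
  fixes n :: nat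
  assumes "n \<ge> 9"
  defines "G \<equiv> disj_union (disj_union (path_graph 4) (path_graph (n - 5))) K1"
  shows "gverts G = n"
    and "gadj G i j \<longleftrightarrow> i < n - 1 \<and> j < n - 1 \<and> (i + 1 = j \<or> j + 1 = i) \<and> \<not> (i = 3 \<and> j = 4) \<and> \<not> (i = 4 \<and> j = 3)"
proof -
  have gv: "gverts (path_graph m) = m" "gadj (path_graph m) = (\<lambda>i j. i < m \<and> j < m \<and> (i + 1 = j \<or> j + 1 = i))"
    "gverts K1 = 1" "gadj K1 = (\<lambda>i j. False)" for m
    unfolding path_graph_def K1_def gverts_def gadj_def by simp_all
  have du: "gverts (disj_union A B) = gverts A + gverts B"
    "gadj (disj_union A B) i j = ((i < gverts A \<and> j < gverts A \<and> gadj A i j) \<or>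
           (gverts A \<le> i \<and> gverts A \<le> j \<and> i < gverts A + gverts B \<and> j < gverts A + gverts B
            \<and> gadj B (i - gverts A) (j - gverts A)))" for A B i j
    unfolding disj_union_def gverts_def gadj_def by simp_all
  show "gverts G = n" unfolding G_def du gv using assms by simp
  show "gadj G i j \<longleftrightarrow> i < n - 1 \<and> j < n - 1 \<and> (i + 1 = j \<or> j + 1 = i) \<and> \<not> (i = 3 \<and> j = 4) \<and> \<not> (i = 4 \<and> j = 3)"
    unfolding G_def du gv using assms by auto
qed

lemma nbr_sum:
  fixes f :: "nat \<Rightarrow> real"
  assumes "\<And>j. P j \<Longrightarrow> (j = i - 1 \<and> 0 < i) \<or> j = i + 1"
    and "\<And>j. P j \<Longrightarrow> j < n"
  shows "(\<Sum>j\<in>{0..<n}. if P j then f j else 0) =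
     (if 0 < i \<and> P (i - 1) then f (i - 1) else 0) + (if P (i + 1) then f (i + 1) else 0)"
proof -
  have "(\<Sum>j\<in>{0..<n}. if P j then f j else 0) =
    (\<Sum>j\<in>{0..<n}. (if j = i - 1 then (if 0 < i \<and> P j then f j else 0) else 0) + (if j = i + 1 then (if P j then f j else 0) else 0))"
    by (rule sum.cong) (use assms(1) in auto)
  also have "\<dots> = (if 0 < i \<and> P (i - 1) then f (i - 1) else 0) + (if P (i + 1) then f (i + 1) else 0)"
    unfolding sum.distrib using assms(2)[of "i+1"] assms(2)[of "i-1"] by (auto simp: sum.delta)
  finally show ?thesis .
qed

lemma rank_full:
  fixes M :: "real mat"
  assumes "M \<in> carrier_mat n n"
    and "\<And>v. v \<in> carrier_vec n \<Longrightarrow> M *\<^sub>v v = 0\<^sub>v n \<Longrightarrow> v = 0\<^sub>v n"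
  shows "real_rank M = n"
proof -
  have "det M \<noteq> 0" using det_0_iff_vec_prod_zero_field[OF assms(1)] assms(2) by blast
  then have "vec_space.rank n M = n" using vec_space.low_rank_det_zero[OF assms(1)] by blast
  then show ?thesis unfolding real_rank_def using assms(1) by simp
qed


lemma mv1:
  fixes G :: graph and v :: "real vec"
  assumes "gverts G = n" "v \<in> carrier_vec n" "i < n"
  shows "((adj_mat G + 1\<^sub>m n) *\<^sub>v v) $ i = v $ i + (\<Sum>j\<in>{0..<n}. if gadj G i j then v $ j else 0)"
proof -
  have "((adj_mat G + 1\<^sub>m n) *\<^sub>v v) $ i = (\<Sum>j\<in>{0..<n}. ((if gadj G i j then 1 else 0) + (if j = i then 1 else 0)) * v $ j)"
    using assms by (simp add: adj_mat_def scalar_prod_def)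
  also have "\<dots> = (\<Sum>j\<in>{0..<n}. (if gadj G i j then v $ j else 0) + (if i = j then v $ j else 0))"
    by (rule sum.cong) (auto simp: distrib_right)
  also have "\<dots> = v $ i + (\<Sum>j\<in>{0..<n}. if gadj G i j then v $ j else 0)"
    using assms(3) by (simp add: sum.distrib sum.delta)
  finally show ?thesis .
qed

lemma mv2:
  fixes G :: graph and v :: "real vec"
  assumes "gverts G = n" "v \<in> carrier_vec n" "i < n" "\<not> gadj G i i"
  shows "((adj_mat (complement G) + 1\<^sub>m n) *\<^sub>v v) $ i = (\<Sum>j\<in>{0..<n}. v $ j) - (\<Sum>j\<in>{0..<n}. if gadj G i j then v $ j else 0)"
proof -
  have "((adj_mat (complement G) + 1\<^sub>m n) *\<^sub>v v) $ i = (\<Sum>j\<in>{0..<n}. ((if i \<noteq> j \<and> \<not> gadj G i j then 1 else 0) + (if j = i then 1 else 0)) * v $ j)"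
    using assms by (auto simp: adj_mat_def scalar_prod_def complement_def gverts_def gadj_def intro!: sum.cong)
  also have "\<dots> = (\<Sum>j\<in>{0..<n}. v $ j - (if gadj G i j then v $ j else 0))"
    by (rule sum.cong) (use assms in auto)
  also have "\<dots> = (\<Sum>j\<in>{0..<n}. v $ j) - (\<Sum>j\<in>{0..<n}. if gadj G i j then v $ j else 0)"
    by (simp add: sum_subtractf)
  finally show ?thesis .
qed


theorem proposition5p8:
  fixes n :: nat
  assumes "n \<ge> 4" and "n mod 6 = 3"
  defines "G \<equiv> disj_union (disj_union (path_graph 4) (path_graph (n - 5))) K1"
  shows "real_rank (adj_mat G + 1\<^sub>m n) = n \<and> real_rank (adj_mat (complement G) + 1\<^sub>m n) = n"
proof -
  obtain q where q: "n = 6 * q + 3" using assms(2) by (metis mult_div_mod_eq add.commute mult.commute)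
  then have "q \<ge> 1" using assms(1) by simp
  then obtain r where r: "q = r + 1" by (metis le_add_diff_inverse2)
  have n9: "n \<ge> 9" using q r by simp
  have m5: "n - 5 = 6 * r + 4" using q r by simp
  have mmod: "(n - 5) mod 3 = 1" unfolding m5 by presburger
  have meven: "even (n - 5)" unfolding m5 by simp
  have gv: "gverts G = n" using G_char(1)[OF n9] unfolding G_def .
  have adjG: "gadj G i j \<longleftrightarrow> i < n - 1 \<and> j < n - 1 \<and> (i + 1 = j \<or> j + 1 = i) \<and> \<not> (i = 3 \<and> j = 4) \<and> \<not> (i = 4 \<and> j = 3)" for i j
    using G_char(2)[OF n9] unfolding G_def .
  have irr: "\<not> gadj G i i" for i by (simp add: adjG)
  have nbr: "(\<Sum>j\<in>{0..<n}. if gadj G i j then f j else 0) = (if 0 < i \<and> gadj G i (i - 1) then f (i - 1) else 0) + (if gadj G i (i + 1) then f (i + 1) else 0)"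
    for f :: "nat \<Rightarrow> real" and i
    by (rule nbr_sum) (auto simp: adjG)
  have gvc: "gverts (complement G) = n" using gv by (simp add: complement_def gverts_def)
  have carr1: "adj_mat G + 1\<^sub>m n \<in> carrier_mat n n" using gv by (simp add: adj_mat_def)
  have carr2: "adj_mat (complement G) + 1\<^sub>m n \<in> carrier_mat n n" using gvc by (simp add: adj_mat_def)
  have A: "\<And>k. gadj G (4 + k) (3 + k) \<longleftrightarrow> 1 \<le> k \<and> 4 + k < n - 1"
    "\<And>k. gadj G (4 + k) (5 + k) \<longleftrightarrow> 5 + k < n - 1"
    by (auto simp: adjG)
  have B: "\<not> gadj G (n - 1) j" for j by (simp add: adjG)
  have C: "gadj G (n - 2) (n - 3)" "\<not> gadj G (n - 2) (n - 1)" using n9 by (auto simp: adjG)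
  have D: "gadj G 0 1" "gadj G 1 0" "gadj G 1 2" "gadj G 2 1" "gadj G 2 3" "gadj G 3 2" "\<not> gadj G 3 4" "\<not> gadj G 4 3" "gadj G 4 5"
    using n9 by (auto simp: adjG)
  have split: "i < 4 \<or> (4 \<le> i \<and> i - 4 < n - 5) \<or> i = n - 1" if "i < n" for i
    using that n9 by auto
  have R1: "real_rank (adj_mat G + 1\<^sub>m n) = n"
  proof (rule rank_full[OF carr1])
    fix v :: "real vec" assume v: "v \<in> carrier_vec n" and z: "(adj_mat G + 1\<^sub>m n) *\<^sub>v v = 0\<^sub>v n"
    define f where "f j = v $ j" for j
    have eq: "f i + ((if 0 < i \<and> gadj G i (i - 1) then f (i - 1) else 0) + (if gadj G i (i + 1) then f (i + 1) else 0)) = 0" if "i < n" for i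
    proof -
      have "((adj_mat G + 1\<^sub>m n) *\<^sub>v v) $ i = 0" using z that by simp
      then show ?thesis using mv1[OF gv v that] nbr[where f=f and i=i] unfolding f_def by simp
    qed
    have e0: "f 0 + f 1 = 0" using eq[of 0] n9 by (auto simp: adjG eval_nat_numeral split: if_splits)
    have e1: "f 1 + (f 0 + f 2) = 0" using eq[of 1] n9 by (auto simp: adjG eval_nat_numeral split: if_splits)
    have e2: "f 2 + (f 1 + f 3) = 0" using eq[of 2] n9 by (auto simp: adjG eval_nat_numeral split: if_splits)
    have e3: "f 3 + f 2 = 0" using eq[of 3] n9 by (auto simp: adjG eval_nat_numeral split: if_splits)
    have small: "f 0 = 0" "f 1 = 0" "f 2 = 0" "f 3 = 0" using e0 e1 e2 e3 by linarith+
    have last: "f (n - 1) = 0" using eq[of "n - 1"] n9 B by simp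
    define g where "g k = f (4 + k)" for k
    have "\<forall>k<n-5. g k = 0"
    proof (rule path_plus)
      show "2 \<le> n - 5" "(n - 5) mod 3 = 1" using n9 mmod by auto
      show "g 0 + g 1 = 0" using eq[of 4] n9 unfolding g_def by (auto simp: adjG eval_nat_numeral split: if_splits)
      show "g (k - 1) + g k + g (k + 1) = 0" if "1 \<le> k" "k + 1 < n - 5" for k
      proof -
        have lt: "4 + k < n" using that by simp
        have c1: "(0 < 4 + k \<and> gadj G (4 + k) (4 + k - 1)) = True" using that by (auto simp: adjG)
        have c2: "gadj G (4 + k) (4 + k + 1) = True" using that by (auto simp: adjG)
        have h: "4 + k - 1 = 3 + k" "4 + k + 1 = 5 + k" "4 + (k - 1) = 3 + k" "4 + (k + 1) = 5 + k" using that by auto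
        have "f (4 + k) + (f (4 + k - 1) + f (4 + k + 1)) = 0" using eq[OF lt] unfolding c1 c2 if_True .
        then show ?thesis unfolding g_def h by linarith
      qed
      have "4 + (n - 5 - 2) = n - 3" "4 + (n - 5 - 1) = n - 2" "n - 2 - 1 = n - 3" "n - 2 + 1 = n - 1" using n9 by auto
      then show "g (n - 5 - 2) + g (n - 5 - 1) = 0" using eq[of "n - 2"] C n9 unfolding g_def by simp
    qed
    then have mid: "f i = 0" if "4 \<le> i" "i - 4 < n - 5" for i
      using that unfolding g_def by (metis le_add_diff_inverse)
    show "v = 0\<^sub>v n"
    proof (rule eq_vecI)
      fix i assume i: "i < dim_vec (0\<^sub>v n :: real vec)"
      then have i': "i < n" by simp
      have "f i = 0"
        using split[OF i'] small last mid by (auto simp: numeral_eq_Suc less_Suc_eq)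
      then show "v $ i = 0\<^sub>v n $ i" using i' unfolding f_def by simp
    qed (use v in simp)
  qed
  have R2: "real_rank (adj_mat (complement G) + 1\<^sub>m n) = n"
  proof (rule rank_full[OF carr2])
    fix v :: "real vec" assume v: "v \<in> carrier_vec n" and z: "(adj_mat (complement G) + 1\<^sub>m n) *\<^sub>v v = 0\<^sub>v n"
    define f where "f j = v $ j" for j
    define S where "S = (\<Sum>j\<in>{0..<n}. f j)"
    have eq0: "S - ((if 0 < i \<and> gadj G i (i - 1) then f (i - 1) else 0) + (if gadj G i (i + 1) then f (i + 1) else 0)) = 0" if "i < n" for i
    proof -
      have "((adj_mat (complement G) + 1\<^sub>m n) *\<^sub>v v) $ i = 0" using z that by simp
      then show ?thesis using mv2[OF gv v that irr] nbr[where f=f and i=i] unfolding f_def S_def by simp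
    qed
    have S0: "S = 0" using eq0[of "n - 1"] n9 B by simp
    have eq: "(if 0 < i \<and> gadj G i (i - 1) then f (i - 1) else 0) + (if gadj G i (i + 1) then f (i + 1) else 0) = 0" if "i < n" for i
      using eq0[OF that] S0 by simp
    have e0: "f 1 = 0" using eq[of 0] n9 by (auto simp: adjG eval_nat_numeral split: if_splits)
    have e1: "f 0 + f 2 = 0" using eq[of 1] n9 by (auto simp: adjG eval_nat_numeral split: if_splits)
    have e2: "f 1 + f 3 = 0" using eq[of 2] n9 by (auto simp: adjG eval_nat_numeral split: if_splits)
    have e3: "f 2 = 0" using eq[of 3] n9 by (auto simp: adjG eval_nat_numeral split: if_splits)
    have small: "f 0 = 0" "f 1 = 0" "f 2 = 0" "f 3 = 0" using e0 e1 e2 e3 by linarith+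
    have last: "f (n - 1) = 0"
    proof -
      have "S = (\<Sum>j\<in>{0..<n-1}. f j) + f (n - 1)" unfolding S_def using n9
        by (metis Suc_diff_1 less_le_trans zero_less_numeral sum.atLeast0_lessThan_Suc)
      moreover have "(\<Sum>j\<in>{0..<n-1}. f j) = 0"
      proof (rule sum.neutral, rule ballI)
        fix j assume j: "j \<in> {0..<n-1}"
        have "\<forall>k<n-5. f (4 + k) = 0"
        proof (rule path_adj)
          show "2 \<le> n - 5" "even (n - 5)" using n9 meven by auto
          show "f (4 + 1) = 0" using eq[of 4] n9 by (auto simp: adjG eval_nat_numeral split: if_splits)
          show "f (4 + (k - 1)) + f (4 + (k + 1)) = 0" if "1 \<le> k" "k + 1 < n - 5" for k
          proof -
            have lt: "4 + k < n" using that by simp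
            have c1: "(0 < 4 + k \<and> gadj G (4 + k) (4 + k - 1)) = True" using that by (auto simp: adjG)
            have c2: "gadj G (4 + k) (4 + k + 1) = True" using that by (auto simp: adjG)
            have h: "4 + k - 1 = 3 + k" "4 + k + 1 = 5 + k" "4 + (k - 1) = 3 + k" "4 + (k + 1) = 5 + k" using that by auto
            have "f (4 + k - 1) + f (4 + k + 1) = 0" using eq[OF lt] unfolding c1 c2 if_True .
            then show ?thesis unfolding h by linarith
          qed
          have "4 + (n - 5 - 2) = n - 3" "n - 2 - 1 = n - 3" "n - 2 + 1 = n - 1" using n9 by auto
          then show "f (4 + (n - 5 - 2)) = 0" using eq[of "n - 2"] C n9 by simp
        qed
        then have mid: "f i = 0" if "4 \<le> i" "i - 4 < n - 5" for i
          using that by (metis le_add_diff_inverse)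
        have "j < 4 \<or> (4 \<le> j \<and> j - 4 < n - 5)" using j n9 by auto
        then show "f j = 0" using small mid by (auto simp: numeral_eq_Suc less_Suc_eq)
      qed
      ultimately show ?thesis using S0 by simp
    qed
    have mid: "f i = 0" if "4 \<le> i" "i - 4 < n - 5" for i
    proof -
      have "\<forall>k<n-5. f (4 + k) = 0"
      proof (rule path_adj)
        show "2 \<le> n - 5" "even (n - 5)" using n9 meven by auto
        show "f (4 + 1) = 0" using eq[of 4] n9 by (auto simp: adjG eval_nat_numeral split: if_splits)
        show "f (4 + (k - 1)) + f (4 + (k + 1)) = 0" if "1 \<le> k" "k + 1 < n - 5" for k
        proof -
          have lt: "4 + k < n" using that by simp
          have c1: "(0 < 4 + k \<and> gadj G (4 + k) (4 + k - 1)) = True" using that by (auto simp: adjG)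
          have c2: "gadj G (4 + k) (4 + k + 1) = True" using that by (auto simp: adjG)
          have h: "4 + k - 1 = 3 + k" "4 + k + 1 = 5 + k" "4 + (k - 1) = 3 + k" "4 + (k + 1) = 5 + k" using that by auto
          have "f (4 + k - 1) + f (4 + k + 1) = 0" using eq[OF lt] unfolding c1 c2 if_True .
          then show ?thesis unfolding h by linarith
        qed
        have "4 + (n - 5 - 2) = n - 3" "n - 2 - 1 = n - 3" "n - 2 + 1 = n - 1" using n9 by auto
        then show "f (4 + (n - 5 - 2)) = 0" using eq[of "n - 2"] C n9 by simp
      qed
      then show ?thesis using that by (metis le_add_diff_inverse)
    qed
    show "v = 0\<^sub>v n"
    proof (rule eq_vecI)
      fix i assume i: "i < dim_vec (0\<^sub>v n :: real vec)"
      then have i': "i < n" by simp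
      have "f i = 0"
        using split[OF i'] small last mid by (auto simp: numeral_eq_Suc less_Suc_eq)
      then show "v $ i = 0\<^sub>v n $ i" using i' unfolding f_def by simp
    qed (use v in simp)
  qed
  show ?thesis using R1 R2 by simp
qed

end
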